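(* Let $\sigma\in S_k$ be a $213$-avoiding permutation, i.e. there are no $1\le i_1<i_2<i_3\le k$ with $\sigma(i_2)<\sigma(i_1)<\sigma(i_3)$. Then there exists a strongly regular bi-sequence $\mathcal A$ of length $k$ such that $\sigma=\sigma_0(\mathcal A)$.
   Context: A bi-sequence of length $k$ is a pair $\mathcal A=\begin{pmatrix}a_1&\cdots&a_k\\ b_1&\cdots&b_k\end{pmatrix}$ of integer sequences with $a_1\le\cdots\le a_k$, $b_1\ge\cdots\ge b_k$, and $a_i\le b_{k+1-i}+1$ for all $i$. It is regular if the $a_i$ are pairwise distinct and the $b_i$ are pairwise distinct; it is strongly regular if it is regular and $\{a_1,\dots,a_k\}\cap\{b_1+1,\dots,b_k+1\}=\emptyset$. The permutation $\sigma_0(\mathcal A)\in S_k$ is defined recursively for $i=k,k-1,\dots,1$ by $\sigma_0^{-1}(i)=\max\{j\notin\sigma_0^{-1}(\{i+1,\dots,k\}) : a_j\le b_i+1\}$. *)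

theory Defs
  imports "HOL-Combinatorics.Permutations"
begin

text \<open>Sequences of length k are functions nat => int, indexed by 1..k.\<close>

definition bi_sequence :: "nat \<Rightarrow> (nat \<Rightarrow> int) \<Rightarrow> (nat \<Rightarrow> int) \<Rightarrow> bool" where
  "bi_sequence k a b \<longleftrightarrow>
     (\<forall>i j. 1 \<le> i \<and> i \<le> j \<and> j \<le> k \<longrightarrow> a i \<le> a j) \<and>
     (\<forall>i j. 1 \<le> i \<and> i \<le> j \<and> j \<le> k \<longrightarrow> b i \<ge> b j) \<and>
     (\<forall>i\<in>{1..k}. a i \<le> b (k + 1 - i) + 1)"

definition regular_bi_sequence :: "nat \<Rightarrow> (nat \<Rightarrow> int) \<Rightarrow> (nat \<Rightarrow> int) \<Rightarrow> bool" where
  "regular_bi_sequence k a b \<longleftrightarrow>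
     bi_sequence k a b \<and> inj_on a {1..k} \<and> inj_on b {1..k}"

definition strongly_regular_bi_sequence :: "nat \<Rightarrow> (nat \<Rightarrow> int) \<Rightarrow> (nat \<Rightarrow> int) \<Rightarrow> bool" where
  "strongly_regular_bi_sequence k a b \<longleftrightarrow>
     regular_bi_sequence k a b \<and> a ` {1..k} \<inter> (\<lambda>i. b i + 1) ` {1..k} = {}"

text \<open>sig0_inv_list k a b n = [sigma0^-1(k), sigma0^-1(k-1), ..., sigma0^-1(k-n+1)]\<close>
primrec sig0_inv_list :: "nat \<Rightarrow> (nat \<Rightarrow> int) \<Rightarrow> (nat \<Rightarrow> int) \<Rightarrow> nat \<Rightarrow> nat list" where
  "sig0_inv_list k a b 0 = []"
| "sig0_inv_list k a b (Suc n) =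
     (let used = sig0_inv_list k a b n
      in used @ [Max {j \<in> {1..k}. j \<notin> set used \<and> a j \<le> b (k - n) + 1}])"

definition sig0_inv :: "nat \<Rightarrow> (nat \<Rightarrow> int) \<Rightarrow> (nat \<Rightarrow> int) \<Rightarrow> nat \<Rightarrow> nat" where
  "sig0_inv k a b i = sig0_inv_list k a b k ! (k - i)"

definition sigma0 :: "nat \<Rightarrow> (nat \<Rightarrow> int) \<Rightarrow> (nat \<Rightarrow> int) \<Rightarrow> nat \<Rightarrow> nat" where
  "sigma0 k a b j = (if j \<in> {1..k} then (THE i. i \<in> {1..k} \<and> sig0_inv k a b i = j) else j)"

definition avoids_213 :: "nat \<Rightarrow> (nat \<Rightarrow> nat) \<Rightarrow> bool" where
  "avoids_213 k \<sigma> \<longleftrightarrow>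
     \<not> (\<exists>i1 i2 i3. 1 \<le> i1 \<and> i1 < i2 \<and> i2 < i3 \<and> i3 \<le> k \<and>
            \<sigma> i2 < \<sigma> i1 \<and> \<sigma> i1 < \<sigma> i3)"

end

theory Submission
  imports Defs
begin

lemma card_le_Max_aux:
  fixes S :: "nat set"
  assumes "finite S" "S \<noteq> {}" "\<forall>x\<in>S. x \<ge> 1"
  shows "card S \<le> Max S"
proof -
  have "S \<subseteq> {1..Max S}" using assms by auto
  hence "card S \<le> card {1..Max S}" by (intro card_mono) auto
  thus ?thesis by simp
qed

lemma key_ineq:
  fixes j n c M :: nat
  assumes "c < M"
  shows "(int M * int j \<le> int M * int n + int c) \<longleftrightarrow> j \<le> n"
proof
  assume h: "int M * int j \<le> int M * int n + int c"
  show "j \<le> n"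
  proof (rule ccontr)
    assume "\<not> j \<le> n"
    hence "j \<ge> n + 1" by simp
    hence "int M * int j \<ge> int M * (int n + 1)" by (intro mult_left_mono) auto
    thus False using h assms by (simp add: algebra_simps)
  qed
next
  assume "j \<le> n"
  hence "int M * int j \<le> int M * int n" by (intro mult_left_mono) auto
  thus "int M * int j \<le> int M * int n + int c" by simp
qed

lemma key_neq:
  fixes j n c M :: nat
  assumes "c < M" "c > 0"
  shows "int M * int j \<noteq> int M * int n + int c"
proof
  assume h: "int M * int j = int M * int n + int c"
  show False
  proof (cases "j \<le> n")
    case True
    hence "int M * int j \<le> int M * int n" by (intro mult_left_mono) auto
    thus False using h assms by simp
  next
    case False
    hence "j \<ge> n + 1" by simp
    hence "int M * int j \<ge> int M * (int n + 1)" by (intro mult_left_mono) auto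
    thus False using h assms by (simp add: algebra_simps)
  qed
qed

theorem mainTheorem3:
  fixes k :: nat and \<sigma> :: "nat \<Rightarrow> nat"
  assumes "\<sigma> permutes {1..k}"
    and "avoids_213 k \<sigma>"
  shows "\<exists>a b :: nat \<Rightarrow> int. strongly_regular_bi_sequence k a b \<and> \<sigma> = sigma0 k a b"
proof -
  define P where "P = inv \<sigma>"
  have Pp: "P permutes {1..k}" unfolding P_def using assms(1) by (rule permutes_inv)
  have sP: "\<And>x. \<sigma> (P x) = x" unfolding P_def using assms(1) permutes_inverses(1) by metis
  have Ps: "\<And>x. P (\<sigma> x) = x" unfolding P_def using assms(1) permutes_inverses(2) by metis
  have Pin: "\<And>x. x \<in> {1..k} \<Longrightarrow> P x \<in> {1..k}" using Pp by (meson permutes_in_image)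
  have sin: "\<And>x. x \<in> {1..k} \<Longrightarrow> \<sigma> x \<in> {1..k}" using assms(1) by (meson permutes_in_image)
  have sout: "\<And>x. x \<notin> {1..k} \<Longrightarrow> \<sigma> x = x" using assms(1) by (simp add: permutes_not_in)
  have Pinj: "inj P" using Pp permutes_inj by blast
  define N where "N i = Max (P ` {i..k})" for i
  define M where "M = k + 2"
  define a where "a j = int M * int j" for j
  define b where "b i = int M * int (N i) + int (k - i) + 1" for i
  have Nge: "P q \<le> N i" if "i \<le> q" "q \<le> k" for i q
    unfolding N_def using that by (intro Max_ge) auto
  have Nmem: "\<exists>q\<in>{i..k}. N i = P q" if "i \<le> k" for i
  proof -
    have "N i \<in> P ` {i..k}" unfolding N_def using that by (intro Max_in) auto
    thus ?thesis by auto
  qed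
  have Nmono: "N j \<le> N i" if h: "1 \<le> i" "i \<le> j" "j \<le> k" for i j
  proof -
    obtain q where "q \<in> {j..k}" "N j = P q" using Nmem h(3) by blast
    thus ?thesis using Nge[of i q] h by auto
  qed
  have aleb: "a j \<le> b i + 1 \<longleftrightarrow> j \<le> N i" if "i \<in> {1..k}" for i j
  proof -
    have "a j \<le> b i + 1 \<longleftrightarrow> int M * int j \<le> int M * int (N i) + int (k - i + 2)"
      unfolding a_def b_def using that by auto
    also have "\<dots> \<longleftrightarrow> j \<le> N i" by (rule key_ineq) (use that in \<open>auto simp: M_def\<close>)
    finally show ?thesis .
  qed
  have bstrict: "b j < b i" if "1 \<le> i" "i < j" "j \<le> k" for i j
  proof -
    have "int M * int (N j) \<le> int M * int (N i)" using Nmono[of i j] that by (intro mult_left_mono) auto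
    thus ?thesis using that unfolding b_def by auto
  qed
  have bi: "bi_sequence k a b"
    unfolding bi_sequence_def
  proof (intro conjI allI impI ballI)
    fix i j assume "1 \<le> i \<and> i \<le> j \<and> j \<le> k"
    thus "a i \<le> a j" unfolding a_def by (simp add: mult_left_mono)
  next
    fix i j assume h: "1 \<le> i \<and> i \<le> j \<and> j \<le> k"
    thus "b i \<ge> b j" using bstrict[of i j] by (cases "i = j") auto
  next
    fix i assume i: "i \<in> {1..k}"
    have "card (P ` {k+1-i..k}) = card {k+1-i..k}"
      by (rule card_image) (use Pinj in \<open>auto intro: inj_on_subset\<close>)
    also have "\<dots> = i" using i by auto
    finally have "i \<le> N (k+1-i)" unfolding N_def
      using card_le_Max_aux[of "P ` {k+1-i..k}"] i Pin by fastforce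
    moreover have "k+1-i \<in> {1..k}" using i by auto
    ultimately show "a i \<le> b (k + 1 - i) + 1" using aleb[of "k+1-i" i] by blast
  qed
  have sr: "strongly_regular_bi_sequence k a b"
    unfolding strongly_regular_bi_sequence_def regular_bi_sequence_def
  proof (intro conjI bi)
    show "inj_on a {1..k}" unfolding a_def inj_on_def M_def by auto
    show "inj_on b {1..k}" unfolding inj_on_def
      by (metis atLeastAtMost_iff bstrict less_irrefl nat_neq_iff)
    show "a ` {1..k} \<inter> (\<lambda>i. b i + 1) ` {1..k} = {}"
    proof (rule ccontr)
      assume "\<not> ?thesis"
      then obtain j i where "i \<in> {1..k}" "a j = b i + 1" by blast
      hence "int M * int j = int M * int (N i) + int (k - i + 2)" unfolding a_def b_def by auto
      moreover have "int M * int j \<noteq> int M * int (N i) + int (k - i + 2)"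
        by (rule key_neq) (use \<open>i \<in> {1..k}\<close> in \<open>auto simp: M_def\<close>)
      ultimately show False by simp
    qed
  qed
  have step: "Max {j \<in> {1..k}. j \<notin> P ` {i+1..k} \<and> a j \<le> b i + 1} = P i" if i: "i \<in> {1..k}" for i
  proof (rule Max_eqI)
    show "finite {j \<in> {1..k}. j \<notin> P ` {i+1..k} \<and> a j \<le> b i + 1}" by auto
    show "P i \<in> {j \<in> {1..k}. j \<notin> P ` {i+1..k} \<and> a j \<le> b i + 1}"
      using Pin[OF i] aleb[OF i] Nge[of i i] i Pinj by (auto dest: injD)
  next
    fix j assume "j \<in> {j \<in> {1..k}. j \<notin> P ` {i+1..k} \<and> a j \<le> b i + 1}"
    hence j: "j \<in> {1..k}" "j \<notin> P ` {i+1..k}" "j \<le> N i" using aleb[OF i] by auto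
    show "j \<le> P i"
    proof (rule ccontr)
      assume "\<not> j \<le> P i"
      hence jg: "P i < j" by simp
      obtain q where q: "q \<in> {i..k}" "N i = P q" using Nmem i by (meson atLeastAtMost_iff)
      have "q \<noteq> i" using q j jg by auto
      hence qi: "q > i" using q by auto
      have jq: "j < P q" using j q qi by (metis atLeastAtMost_iff image_eqI le_neq_implies_less Suc_eq_plus1 Suc_le_eq)
      have "\<sigma> j \<in> {1..k}" using sin j by auto
      moreover have "\<sigma> j \<notin> {i+1..k}" using j(2) Ps by (metis image_eqI)
      moreover have "\<sigma> j \<noteq> i" using jg Ps by (metis less_irrefl)
      ultimately have sj: "\<sigma> j < i" by auto
      have "1 \<le> P i" "P q \<le> k" using Pin i q by auto
      hence "\<exists>i1 i2 i3. 1 \<le> i1 \<and> i1 < i2 \<and> i2 < i3 \<and> i3 \<le> k \<and>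
            \<sigma> i2 < \<sigma> i1 \<and> \<sigma> i1 < \<sigma> i3"
        using jg jq sj qi sP by (intro exI[of _ "P i"] exI[of _ j] exI[of _ "P q"]) auto
      thus False using assms(2) unfolding avoids_213_def by blast
    qed
  qed
  have lst: "n \<le> k \<Longrightarrow> sig0_inv_list k a b n = map (\<lambda>t. P (k - t)) [0..<n]" for n
  proof (induction n)
    case 0 thus ?case by simp
  next
    case (Suc n)
    have IH: "sig0_inv_list k a b n = map (\<lambda>t. P (k - t)) [0..<n]" using Suc by simp
    have "set (map (\<lambda>t. P (k - t)) [0..<n]) = P ` {k-n+1..k}"
    proof -
      have "(\<lambda>t. k - t) ` {0..<n} = {k-n+1..k}" using Suc.prems
      proof -
        have "x \<in> (\<lambda>t. k - t) ` {0..<n}" if "x \<in> {k-n+1..k}" for x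
          using that Suc.prems by (intro image_eqI[of _ _ "k - x"]) auto
        thus ?thesis using Suc.prems by auto
      qed
      thus ?thesis by (simp add: image_image flip: image_comp) (metis image_image)
    qed
    moreover have "k - n \<in> {1..k}" using Suc.prems by auto
    moreover have "k - n + 1 = k - n + 1" by simp
    ultimately show ?case using step[of "k-n"] IH Suc.prems
      by (simp add: Let_def)
  qed
  have si: "sig0_inv k a b i = P i" if "i \<in> {1..k}" for i
    using that lst[of k] unfolding sig0_inv_def by (simp add: nth_map)
  have "\<sigma> = sigma0 k a b"
  proof
    fix j
    show "\<sigma> j = sigma0 k a b j"
    proof (cases "j \<in> {1..k}")
      case True
      have "(THE i. i \<in> {1..k} \<and> sig0_inv k a b i = j) = \<sigma> j"
      proof (rule the_equality)
        show "\<sigma> j \<in> {1..k} \<and> sig0_inv k a b (\<sigma> j) = j" using sin[OF True] si Ps by auto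
      next
        fix i assume "i \<in> {1..k} \<and> sig0_inv k a b i = j"
        thus "i = \<sigma> j" using si sP by metis
      qed
      thus ?thesis using True unfolding sigma0_def by simp
    next
      case False thus ?thesis using sout[OF False] unfolding sigma0_def by (simp only: if_False)
    qed
  qed
  thus ?thesis using sr by blast
qed

end
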